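(* There is an absolute constant $c>0$ such that for every instance $I$ of continuous BGT, the schedule produced by Algorithm 1 satisfies $\mathrm{MH}\le c\cdot \frac{h_{\max}}{h_{\min}}\cdot\mathrm{OPT}(I)$. (Algorithm 1: compute a minimum spanning tree $T$ of $V$ with respect to the travel times, and let the robot, starting at $v_1$, repeatedly traverse a closed Euler tour of $T$, i.e. a closed walk starting and ending at $v_1$ that traverses every edge of $T$ exactly twice; bamboos are cut whenever the robot is at their point.)
   Context: Continuous BGT: bamboos at points $V=\{v_1,\dots,v_n\}$, $n\ge2$, growth rates $h_1\ge\dots\ge h_n>0$ with $h_1>h_n$, initial heights $0$; symmetric travel times $t_{i,j}>0$ ($i\ne j$) satisfying the triangle inequality. A robot starts at $v_1$ at time $0$, travels between points with time $t_{i,j}$ from $v_i$ to $v_j$, and cuts the bamboo at every point it is at, instantaneously, to height $0$. Height of $b_i$ at time $t$ is $h_i$ times time elapsed since its last cut (or since $0$). $\mathrm{MH}$ of a schedule is the supremum of all heights over all times; $\mathrm{OPT}(I)$ is the infimum of $\mathrm{MH}$ over all robot walks. $h_{\max}=h_1$, $h_{\min}=h_n$. *)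

theory Defs
  imports Complex_Main "HOL-Library.Extended_Real"
begin

text \<open>Points are v_1..v_n, represented by indices 0..n-1 (index 0 is v_1).
  Growth rates h i, travel times t i j.\<close>

definition bgt_instance :: "nat \<Rightarrow> (nat \<Rightarrow> real) \<Rightarrow> (nat \<Rightarrow> nat \<Rightarrow> real) \<Rightarrow> bool" where
  "bgt_instance n h t \<longleftrightarrow>
     n \<ge> 2 \<and>
     (\<forall>i j. i < j \<and> j < n \<longrightarrow> h j \<le> h i) \<and>
     h (n - 1) > 0 \<and> h 0 > h (n - 1) \<and>
     (\<forall>i j. i < n \<and> j < n \<and> i \<noteq> j \<longrightarrow> t i j > 0 \<and> t i j = t j i) \<and>
     (\<forall>i j k. i < n \<and> j < n \<and> k < n \<and> i \<noteq> j \<and> j \<noteq> k \<and> i \<noteq> k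
        \<longrightarrow> t i k \<le> t i j + t j k)"

text \<open>A robot walk: the k-th visited point is w k; the robot arrives there at time a k,
  stays (cutting) until time d k, then travels directly to w (k+1).\<close>

definition valid_walk :: "nat \<Rightarrow> (nat \<Rightarrow> nat \<Rightarrow> real) \<Rightarrow> (nat \<Rightarrow> nat) \<Rightarrow> (nat \<Rightarrow> real) \<Rightarrow> (nat \<Rightarrow> real) \<Rightarrow> bool" where
  "valid_walk n t w a d \<longleftrightarrow>
     w 0 = 0 \<and> a 0 = 0 \<and>
     (\<forall>k. w k < n) \<and> (\<forall>k. w (Suc k) \<noteq> w k) \<and>
     (\<forall>k. a k \<le> d k) \<and>
     (\<forall>k. a (Suc k) = d k + t (w k) (w (Suc k)))"

definition at_times :: "(nat \<Rightarrow> nat) \<Rightarrow> (nat \<Rightarrow> real) \<Rightarrow> (nat \<Rightarrow> real) \<Rightarrow> nat \<Rightarrow> real set" where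
  "at_times w a d i = (\<Union>k\<in>{k. w k = i}. {a k .. d k})"

definition height :: "(nat \<Rightarrow> real) \<Rightarrow> (nat \<Rightarrow> nat) \<Rightarrow> (nat \<Rightarrow> real) \<Rightarrow> (nat \<Rightarrow> real) \<Rightarrow> nat \<Rightarrow> real \<Rightarrow> real" where
  "height h w a d i s = h i * (s - Sup ({0} \<union> (at_times w a d i \<inter> {..s})))"

definition MH :: "nat \<Rightarrow> (nat \<Rightarrow> real) \<Rightarrow> (nat \<Rightarrow> nat) \<Rightarrow> (nat \<Rightarrow> real) \<Rightarrow> (nat \<Rightarrow> real) \<Rightarrow> ereal" where
  "MH n h w a d = (SUP s\<in>{0::real..}. SUP i\<in>{..<n}. ereal (height h w a d i s))"

definition OPT :: "nat \<Rightarrow> (nat \<Rightarrow> real) \<Rightarrow> (nat \<Rightarrow> nat \<Rightarrow> real) \<Rightarrow> ereal" where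
  "OPT n h t = (INF wad\<in>{(w, a, d). valid_walk n t w a d}.
                  (case wad of (w, a, d) \<Rightarrow> MH n h w a d))"

text \<open>Undirected edges of the complete graph on {0..<n} are represented as pairs (i,j), i<j.\<close>
definition tree_adj :: "(nat \<times> nat) set \<Rightarrow> nat \<Rightarrow> nat \<Rightarrow> bool" where
  "tree_adj E x y \<longleftrightarrow> (x, y) \<in> E \<or> (y, x) \<in> E"

definition spanning_tree :: "nat \<Rightarrow> (nat \<times> nat) set \<Rightarrow> bool" where
  "spanning_tree n E \<longleftrightarrow>
     E \<subseteq> {(i, j). i < j \<and> j < n} \<and>
     (\<forall>i<n. (0, i) \<in> {(x, y). tree_adj E x y}\<^sup>*) \<and>
     card E = n - 1"

definition tree_weight :: "(nat \<Rightarrow> nat \<Rightarrow> real) \<Rightarrow> (nat \<times> nat) set \<Rightarrow> real" where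
  "tree_weight t E = (\<Sum>(i, j)\<in>E. t i j)"

definition min_spanning_tree :: "nat \<Rightarrow> (nat \<Rightarrow> nat \<Rightarrow> real) \<Rightarrow> (nat \<times> nat) set \<Rightarrow> bool" where
  "min_spanning_tree n t E \<longleftrightarrow>
     spanning_tree n E \<and> (\<forall>E'. spanning_tree n E' \<longrightarrow> tree_weight t E \<le> tree_weight t E')"

definition euler_tour :: "(nat \<times> nat) set \<Rightarrow> nat list \<Rightarrow> bool" where
  "euler_tour E tour \<longleftrightarrow>
     tour \<noteq> [] \<and> hd tour = 0 \<and> last tour = 0 \<and>
     (\<forall>k. Suc k < length tour \<longrightarrow> tree_adj E (tour ! k) (tour ! Suc k)) \<and>
     (\<forall>(i, j)\<in>E. card {k. Suc k < length tour \<and> {tour ! k, tour ! Suc k} = {i, j}} = 2)"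

text \<open>Algorithm 1's schedule: repeat the tour forever, without waiting.\<close>
definition alg_walk :: "nat list \<Rightarrow> nat \<Rightarrow> nat" where
  "alg_walk tour k = tour ! (k mod (length tour - 1))"

fun alg_times :: "(nat \<Rightarrow> nat \<Rightarrow> real) \<Rightarrow> nat list \<Rightarrow> nat \<Rightarrow> real" where
  "alg_times t tour 0 = 0"
| "alg_times t tour (Suc k) = alg_times t tour k + t (alg_walk tour k) (alg_walk tour (Suc k))"

end

theory Submission
  imports Defs
begin

lemma bgt_D:
  assumes "bgt_instance n h t"
  shows "n \<ge> 2" "\<And>i j. i < j \<Longrightarrow> j < n \<Longrightarrow> h j \<le> h i" "h (n - 1) > 0" "h 0 > h (n - 1)"
    "\<And>i j. i < n \<Longrightarrow> j < n \<Longrightarrow> i \<noteq> j \<Longrightarrow> t i j > 0"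
    "\<And>i j. i < n \<Longrightarrow> j < n \<Longrightarrow> i \<noteq> j \<Longrightarrow> t i j = t j i"
  using assms unfolding bgt_instance_def by blast+

lemma walk_basic:
  assumes bgt: "bgt_instance n h t" and vw: "valid_walk n t w a d"
  shows "\<And>k. 0 < t (w k) (w (Suc k))" and "\<And>k. a k + t (w k) (w (Suc k)) \<le> a (Suc k)"
    and "\<And>k m. k \<le> m \<Longrightarrow> a k \<le> a m"
    and "\<And>K. (\<Sum>q<K. t (w q) (w (Suc q))) \<le> a K"
proof -
  show pos: "\<And>k. 0 < t (w k) (w (Suc k))"
    using bgt vw unfolding bgt_instance_def valid_walk_def by metis
  show st: "\<And>k. a k + t (w k) (w (Suc k)) \<le> a (Suc k)"
    using vw unfolding valid_walk_def by (metis add_le_cancel_right)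
  show "\<And>k m. k \<le> m \<Longrightarrow> a k \<le> a m"
  proof -
    fix k m :: nat assume "k \<le> m"
    moreover have "\<And>k. a k \<le> a (Suc k)" using st pos by (meson le_add_same_cancel1 less_imp_le order_trans)
    ultimately show "a k \<le> a m" by (metis lift_Suc_mono_le)
  qed
  show "\<And>K. (\<Sum>q<K. t (w q) (w (Suc q))) \<le> a K"
  proof -
    fix K show "(\<Sum>q<K. t (w q) (w (Suc q))) \<le> a K"
    proof (induction K)
      case 0 then show ?case using vw by (simp add: valid_walk_def)
    next
      case (Suc K) then show ?case using st[of K] by simp
    qed
  qed
qed

lemma walk_covers:
  assumes bgt: "bgt_instance n h t" and mst: "min_spanning_tree n t E"
    and vw: "valid_walk n t w a d"
    and cov: "\<forall>i<n. \<exists>k. w k = i \<and> a k \<le> T"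
  shows "tree_weight t E \<le> T"
proof -
  note wb = walk_basic[OF bgt vw]
  have w0: "w 0 = 0" and wn: "\<And>k. w k < n" and wd: "\<And>k. w (Suc k) \<noteq> w k"
    using vw by (auto simp: valid_walk_def)
  have n2: "n \<ge> 2" using bgt by (simp add: bgt_instance_def)
  have tsym: "\<And>i j. i < n \<Longrightarrow> j < n \<Longrightarrow> i \<noteq> j \<Longrightarrow> t i j = t j i"
    using bgt by (simp add: bgt_instance_def)
  define f where "f v = (LEAST k. w k = v)" for v
  have fw: "w (f v) = v" if "v < n" for v
    using cov that unfolding f_def by (metis (mono_tags, lifting) LeastI)
  have fT: "a (f v) \<le> T" if "v < n" for v
  proof -
    obtain k where k: "w k = v" "a k \<le> T" using cov \<open>v < n\<close> by blast
    have "f v \<le> k" unfolding f_def using k(1) by (rule Least_le)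
    then show ?thesis using wb(3)[of "f v" k] k by linarith
  qed
  have fle: "f v \<le> k" if "w k = v" for v k unfolding f_def using that by (rule Least_le)
  have f0: "f 0 = 0" using fle[of 0 0] w0 by simp
  have fpos: "0 < f v" if "v < n" "v \<noteq> 0" for v
    using fw[OF that(1)] that w0 by (metis gr0I)
  define p where "p v = w (f v - 1)" for v
  have pn: "p v < n" for v using wn by (simp add: p_def)
  have pf: "f (p v) < f v" if "v < n" "v \<noteq> 0" for v
    using fle[of "f v - 1" "p v"] fpos[OF that] by (simp add: p_def)
  have pne: "p v \<noteq> v" if "v < n" "v \<noteq> 0" for v
  proof -
    have "Suc (f v - 1) = f v" using fpos[OF that] by simp
    then show ?thesis using wd[of "f v - 1"] fw[OF that(1)] by (simp add: p_def)
  qed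
  have pstep: "t (p v) v = t (w (f v - 1)) (w (Suc (f v - 1)))" if "v < n" "v \<noteq> 0" for v
  proof -
    have "Suc (f v - 1) = f v" using fpos[OF that] by simp
    then show ?thesis using fw[OF that(1)] by (simp add: p_def)
  qed
  define g where "g v = (min (p v) v, max (p v) v)" for v
  define E' where "E' = g ` {1..<n}"
  have ginj: "inj_on g {1..<n}"
  proof (rule inj_onI)
    fix u v assume u: "u \<in> {1..<n}" and v: "v \<in> {1..<n}" and e: "g u = g v"
    have "u = v \<or> (u = p v \<and> v = p u)" using e unfolding g_def
      by (auto simp: min_def max_def split: if_splits)
    then show "u = v" using pf[of u] pf[of v] u v by auto
  qed
  have st: "spanning_tree n E'"
    unfolding spanning_tree_def
  proof (intro conjI)
    show "E' \<subseteq> {(i, j). i < j \<and> j < n}"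
    proof (unfold E'_def, rule image_subsetI)
      fix v assume "v \<in> {1..<n}"
      then have "p v \<noteq> v" "v < n" "p v < n" using pne pn by auto
      then show "g v \<in> {(i, j). i < j \<and> j < n}" unfolding g_def by (auto simp: min_def max_def)
    qed
    show "card E' = n - 1" unfolding E'_def using card_image[OF ginj] by simp
    have "\<forall>v. v < n \<longrightarrow> (0, v) \<in> {(x, y). tree_adj E' x y}\<^sup>*"
    proof (intro allI)
      fix v show "v < n \<longrightarrow> (0, v) \<in> {(x, y). tree_adj E' x y}\<^sup>*"
      proof (induction v rule: measure_induct_rule[where f = f])
        case (less v)
        show ?case
        proof (cases "v = 0")
          case True then show ?thesis by simp
        next
          case False
          show ?thesis
          proof
            assume vn: "v < n"
            have "(0, p v) \<in> {(x, y). tree_adj E' x y}\<^sup>*" using less pf[OF vn False] pn by blast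
            moreover have "tree_adj E' (p v) v"
              using vn False unfolding tree_adj_def E'_def g_def
              by (cases "p v \<le> v") (auto simp: min_def max_def)
            ultimately show "(0, v) \<in> {(x, y). tree_adj E' x y}\<^sup>*"
              by (simp add: rtrancl_into_rtrancl)
          qed
        qed
      qed
    qed
    then show "\<forall>i<n. (0, i) \<in> {(x, y). tree_adj E' x y}\<^sup>*" by blast
  qed
  define K where "K = Max (f ` {..<n})"
  have K: "K \<in> f ` {..<n}" "K = Max (f ` {..<n})" unfolding K_def
    using n2 by (intro Max_in) (auto simp: lessThan_empty_iff)
  have "tree_weight t E \<le> tree_weight t E'" using mst st by (simp add: min_spanning_tree_def)
  also have "tree_weight t E' = (\<Sum>v\<in>{1..<n}. t (p v) v)"
  proof -
    have "tree_weight t E' = (\<Sum>v\<in>{1..<n}. (\<lambda>(i, j). t i j) (g v))"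
      unfolding tree_weight_def E'_def using sum.reindex[OF ginj] by (simp add: comp_def)
    also have "\<dots> = (\<Sum>v\<in>{1..<n}. t (p v) v)"
      by (rule sum.cong) (use pne pn tsym in \<open>auto simp: g_def min_def max_def\<close>)
    finally show ?thesis .
  qed
  also have "\<dots> = (\<Sum>v\<in>{1..<n}. t (w ((\<lambda>v. f v - 1) v)) (w (Suc ((\<lambda>v. f v - 1) v))))"
    by (rule sum.cong) (use pstep in auto)
  also have "\<dots> = (\<Sum>q\<in>(\<lambda>v. f v - 1) ` {1..<n}. t (w q) (w (Suc q)))"
  proof (rule sum.reindex[symmetric, unfolded comp_def])
    show "inj_on (\<lambda>v. f v - 1) {1..<n}"
    proof (rule inj_onI)
      fix u v assume u: "u \<in> {1..<n}" and v: "v \<in> {1..<n}" and e: "f u - 1 = f v - 1"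
      then have "f u = f v" using fpos[of u] fpos[of v] by auto
      then show "u = v" using fw[of u] fw[of v] u v by (metis atLeastLessThan_iff)
    qed
  qed
  also have "(\<Sum>q\<in>(\<lambda>v. f v - 1) ` {1..<n}. t (w q) (w (Suc q))) \<le> (\<Sum>q<K. t (w q) (w (Suc q)))"
  proof (rule sum_mono2)
    show "(\<lambda>v. f v - 1) ` {1..<n} \<subseteq> {..<K}"
    proof
      fix q assume "q \<in> (\<lambda>v. f v - 1) ` {1..<n}"
      then obtain v where v: "v \<in> {1..<n}" "q = f v - 1" by blast
      have "f v \<le> K" using K v by (simp add: Max_ge)
      then show "q \<in> {..<K}" using fpos[of v] v by auto
    qed
  qed (use wb(1) in \<open>auto intro: less_imp_le\<close>)
  also have "\<dots> \<le> a K" by (rule wb(4))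
  also have "\<dots> \<le> T" using K fT by blast
  finally show ?thesis .
qed

lemma height_unvisited:
  assumes "0 \<le> T" and "\<forall>k. w k = i \<longrightarrow> T < a k"
  shows "height h w a d i T = h i * T"
proof -
  have "at_times w a d i \<inter> {..T} = {}"
    unfolding at_times_def using assms(2) by fastforce
  then show ?thesis unfolding height_def by simp
qed

lemma MH_ge_height:
  assumes "0 \<le> s" "i < n"
  shows "ereal (height h w a d i s) \<le> MH n h w a d"
  unfolding MH_def
  by (rule order_trans[OF _ SUP_upper[of s]]) (use assms in \<open>auto intro: SUP_upper\<close>)

lemma MH_nonneg:
  assumes "0 < n" shows "0 \<le> MH n h w a d"
proof -
  have "Sup ({0} \<union> (at_times w a d 0 \<inter> {..0})) = (0::real)"
    by (rule cSup_eq_maximum) auto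
  then have "height h w a d 0 0 = 0" unfolding height_def by simp
  then show ?thesis using MH_ge_height[of 0 0 n h w a d] assms by (simp add: zero_ereal_def)
qed

lemma walk_lb:
  assumes bgt: "bgt_instance n h t" and mst: "min_spanning_tree n t E"
    and vw: "valid_walk n t w a d"
  shows "ereal (h (n - 1) * tree_weight t E) \<le> MH n h w a d"
proof (rule dense_le)
  fix x assume x: "x < ereal (h (n - 1) * tree_weight t E)"
  have hm: "0 < h (n - 1)" and n2: "2 \<le> n" using bgt_D[OF bgt] by auto
  have hmono: "h (n - 1) \<le> h i" if "i < n" for i
  proof (cases "i = n - 1")
    case False then have "i < n - 1" using that by linarith
    then show ?thesis using bgt_D(2)[OF bgt, of i "n - 1"] n2 by simp
  qed simp
  show "x \<le> MH n h w a d"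
  proof (cases x)
    case (real r)
    show ?thesis
    proof (cases "r \<le> 0")
      case True then have "x \<le> 0" using real by (simp add: zero_ereal_def)
      moreover have "0 \<le> MH n h w a d" using n2 by (intro MH_nonneg) simp
      ultimately show ?thesis by (rule order_trans)
    next
      case False
      define T where "T = r / h (n - 1)"
      have T0: "0 < T" using False hm by (simp add: T_def)
      have TW: "T < tree_weight t E" using x real hm by (simp add: T_def field_simps)
      have "\<not> (\<forall>i<n. \<exists>k. w k = i \<and> a k \<le> T)"
      proof
        assume "\<forall>i<n. \<exists>k. w k = i \<and> a k \<le> T"
        then have "tree_weight t E \<le> T" by (rule walk_covers[OF bgt mst vw])
        with TW show False by simp
      qed
      then obtain i where i: "i < n" "\<forall>k. w k = i \<longrightarrow> T < a k" by (metis not_le)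
      have "height h w a d i T = h i * T" using height_unvisited[of T w i a] i T0 by simp
      moreover have "r \<le> h i * T"
      proof -
        have "r = h (n - 1) * T" using hm by (simp add: T_def)
        also have "\<dots> \<le> h i * T" using hmono[OF i(1)] T0 by (simp add: mult_right_mono)
        finally show ?thesis .
      qed
      ultimately have "x \<le> ereal (height h w a d i T)" using real by simp
      moreover have "ereal (height h w a d i T) \<le> MH n h w a d" using T0 i by (intro MH_ge_height) auto
      ultimately show ?thesis by (rule order_trans)
    qed
  next
    case PInf then show ?thesis using x by simp
  next
    case MInf then show ?thesis by simp
  qed
qed

lemma euler_D:
  assumes "euler_tour E tour"
  shows "tour \<noteq> []" "tour ! 0 = 0" "tour ! (length tour - 1) = 0"
    "\<And>k. Suc k < length tour \<Longrightarrow> tree_adj E (tour ! k) (tour ! Suc k)"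
    "\<And>i j. (i, j) \<in> E \<Longrightarrow> card {k. Suc k < length tour \<and> {tour ! k, tour ! Suc k} = {i, j}} = 2"
proof -
  show ne: "tour \<noteq> []" using assms by (simp add: euler_tour_def)
  show "tour ! 0 = 0" using assms ne by (simp add: euler_tour_def hd_conv_nth)
  show "tour ! (length tour - 1) = 0" using assms ne by (simp add: euler_tour_def last_conv_nth)
  show "\<And>k. Suc k < length tour \<Longrightarrow> tree_adj E (tour ! k) (tour ! Suc k)"
    using assms by (simp add: euler_tour_def)
  show "\<And>i j. (i, j) \<in> E \<Longrightarrow> card {k. Suc k < length tour \<and> {tour ! k, tour ! Suc k} = {i, j}} = 2"
    using assms unfolding euler_tour_def by blast
qed

lemma st_D:
  assumes "spanning_tree n E"
  shows "E \<subseteq> {(i, j). i < j \<and> j < n}" "\<And>i. i < n \<Longrightarrow> (0, i) \<in> {(x, y). tree_adj E x y}\<^sup>*"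
    "card E = n - 1"
  using assms unfolding spanning_tree_def by blast+

lemma adj_D:
  assumes "E \<subseteq> {(i, j). i < j \<and> j < n}" "tree_adj E x y"
  shows "x \<noteq> y" "x < n" "y < n" "(min x y, max x y) \<in> E"
  using assms unfolding tree_adj_def by (auto simp: min_def max_def)

lemma upper:
  assumes bgt: "bgt_instance n h t" and st: "spanning_tree n E" and et: "euler_tour E tour"
  shows "MH n h (alg_walk tour) (alg_times t tour) (alg_times t tour)
           \<le> ereal (h 0 * (2 * tree_weight t E))"
proof -
  define L where "L = length tour"
  define aw where "aw = alg_walk tour"
  define A where "A = alg_times t tour"
  note ed = euler_D[OF et, folded L_def]
  note sd = st_D[OF st]
  note bd = bgt_D[OF bgt]
  have En: "E \<noteq> {}" using sd(3) bd(1) by auto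
  then obtain i0 j0 where "(i0, j0) \<in> E" by auto
  then have "card {k. Suc k < L \<and> {tour ! k, tour ! Suc k} = {i0, j0}} = 2" using ed(5) by blast
  then obtain k0 where "Suc k0 < L" by (metis (no_types, lifting) card.empty empty_Collect_eq zero_neq_numeral)
  then have L2: "2 \<le> L" by simp
  have aw_eq: "aw j = tour ! j" if "j < L" for j
  proof (cases "j = L - 1")
    case True then show ?thesis using ed(3) ed(2) by (simp add: aw_def alg_walk_def L_def[symmetric])
  next
    case False then show ?thesis using that by (simp add: aw_def alg_walk_def L_def[symmetric])
  qed
  have aw_mod: "aw k = aw (k mod (L - 1))" for k by (simp add: aw_def alg_walk_def L_def)
  have aw_per: "aw (k + m * (L - 1)) = aw k" for k m by (simp add: aw_def alg_walk_def L_def)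
  have step_tour: "t (aw q) (aw (Suc q)) = t (tour ! q) (tour ! Suc q)" if "q < L - 1" for q
    using aw_eq[of q] aw_eq[of "Suc q"] that by simp
  have step_pos: "0 < t (aw k) (aw (Suc k))" for k
  proof -
    define q where "q = k mod (L - 1)"
    have q: "q < L - 1" using L2 by (simp add: q_def)
    have "aw k = aw q" using aw_mod by (simp add: q_def)
    moreover have "aw (Suc k) = aw (Suc q)" using aw_mod[of "Suc k"] aw_mod[of "Suc q"]
      by (simp add: q_def mod_Suc_eq)
    moreover have "tree_adj E (tour ! q) (tour ! Suc q)" using ed(4) q by simp
    ultimately show ?thesis using step_tour[OF q] adj_D[OF sd(1)] bd(5) by metis
  qed
  have A_suc: "A (Suc k) = A k + t (aw k) (aw (Suc k))" for k by (simp add: A_def aw_def)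
  have A_s: "A k \<le> A (Suc k)" for k using A_suc step_pos[of k] by simp
  have A_mono: "A k \<le> A m" if "k \<le> m" for k m
    using A_s that by (rule lift_Suc_mono_le)
  define P where "P = A (L - 1)"
  have A_per1: "A (k + (L - 1)) = A k + P" for k
  proof (induction k)
    case 0 then show ?case by (simp add: P_def A_def)
  next
    case (Suc k)
    have "A (Suc k + (L - 1)) = A (Suc (k + (L - 1)))" by simp
    also have "\<dots> = A (k + (L - 1)) + t (aw (k + (L - 1))) (aw (Suc k + (L - 1)))" by (simp add: A_suc)
    also have "\<dots> = A k + P + t (aw k) (aw (Suc k))" using Suc aw_per[of k 1] aw_per[of "Suc k" 1] by simp
    finally show ?case by (simp add: A_suc)
  qed
  have A_per: "A (k + m * (L - 1)) = A k + real m * P" for k m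
  proof (induction m)
    case 0 then show ?case by simp
  next
    case (Suc m)
    have "k + Suc m * (L - 1) = (k + m * (L - 1)) + (L - 1)" by simp
    then have "A (k + Suc m * (L - 1)) = A ((k + m * (L - 1)) + (L - 1))" by (rule arg_cong)
    also have "\<dots> = A (k + m * (L - 1)) + P" by (rule A_per1)
    also have "\<dots> = A k + real m * P + P" using Suc.IH by simp
    finally show ?case by (simp add: ring_distribs)
  qed
  have A_sum: "A m = (\<Sum>q<m. t (aw q) (aw (Suc q)))" for m
    by (induction m) (simp_all add: A_suc, simp add: A_def)
  have P_pos: "0 < P"
  proof -
    have "A 1 \<le> A (L - 1)" using L2 by (intro A_mono) simp
    moreover have "A 1 = t (aw 0) (aw (Suc 0))" using A_suc[of 0] by (simp add: A_def)
    ultimately show ?thesis using step_pos[of 0] unfolding P_def by linarith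
  qed
  have finE: "finite E"
    by (rule finite_subset[OF sd(1)], rule finite_subset[of _ "{..<n} \<times> {..<n}"]) auto
  define e where "e q = (min (tour ! q) (tour ! Suc q), max (tour ! q) (tour ! Suc q))" for q
  define tt where "tt = (\<lambda>(i, j). t i j)"
  have eE: "e q \<in> E" if "q < L - 1" for q
    using adj_D(4)[OF sd(1) ed(4)[of q]] that by (simp add: e_def)
  have te: "t (tour ! q) (tour ! Suc q) = tt (e q)" if "q < L - 1" for q
  proof -
    have a: "tree_adj E (tour ! q) (tour ! Suc q)" using ed(4)[of q] that by simp
    show ?thesis using adj_D[OF sd(1) a] bd(6)[of "tour ! q" "tour ! Suc q"]
      by (simp add: e_def tt_def min_def max_def)
  qed
  have fib: "{q \<in> {..<L - 1}. e q = x} = {k. Suc k < L \<and> {tour ! k, tour ! Suc k} = {fst x, snd x}}"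
    if "x \<in> E" for x
  proof -
    have ij: "fst x < snd x" using sd(1) that by auto
    show ?thesis
    proof (intro set_eqI iffI)
      fix k assume "k \<in> {q \<in> {..<L - 1}. e q = x}"
      then show "k \<in> {k. Suc k < L \<and> {tour ! k, tour ! Suc k} = {fst x, snd x}}"
        by (auto simp: e_def min_def max_def split: if_splits)
    next
      fix k assume k: "k \<in> {k. Suc k < L \<and> {tour ! k, tour ! Suc k} = {fst x, snd x}}"
      then have "tour ! k \<noteq> tour ! Suc k" using adj_D(1)[OF sd(1) ed(4)[of k]] by simp
      then show "k \<in> {q \<in> {..<L - 1}. e q = x}" using k ij
        by (cases x) (auto simp: e_def min_def max_def doubleton_eq_iff)
    qed
  qed
  have P_eq: "P = 2 * tree_weight t E"
  proof -
    have "P = (\<Sum>q<L - 1. t (aw q) (aw (Suc q)))" unfolding P_def by (rule A_sum)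
    also have "\<dots> = (\<Sum>q<L - 1. tt (e q))" by (rule sum.cong) (simp_all add: step_tour te)
    also have "\<dots> = (\<Sum>x\<in>E. sum (\<lambda>q. tt (e q)) {q \<in> {..<L - 1}. e q = x})"
      by (rule sum.group[symmetric]) (use finE eE in auto)
    also have "\<dots> = (\<Sum>x\<in>E. 2 * tt x)"
    proof (rule sum.cong)
      fix x assume x: "x \<in> E"
      have "sum (\<lambda>q. tt (e q)) {q \<in> {..<L - 1}. e q = x} = sum (\<lambda>q. tt x) {q \<in> {..<L - 1}. e q = x}"
        by (rule sum.cong) auto
      also have "\<dots> = 2 * tt x" using fib[OF x] ed(5)[of "fst x" "snd x"] x by simp
      finally show "sum (\<lambda>q. tt (e q)) {q \<in> {..<L - 1}. e q = x} = 2 * tt x" .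
    qed simp
    also have "\<dots> = 2 * tree_weight t E" by (simp add: tree_weight_def tt_def sum_distrib_left)
    finally show ?thesis .
  qed
  have inset: "x \<in> set tour" if "(0, x) \<in> {(x, y). tree_adj E x y}\<^sup>*" for x
    using that
  proof (induction rule: rtrancl_induct)
    case base then show ?case using ed(1) ed(2) by (metis length_greater_0_conv nth_mem)
  next
    case (step y z)
    then have a: "tree_adj E y z" by simp
    have "card {k. Suc k < L \<and> {tour ! k, tour ! Suc k} = {min y z, max y z}} = 2"
      using ed(5) adj_D(4)[OF sd(1) a] by blast
    then have "{k. Suc k < L \<and> {tour ! k, tour ! Suc k} = {min y z, max y z}} \<noteq> {}"
      by (metis card.empty zero_neq_numeral)
    then obtain k where k: "Suc k < L" "{tour ! k, tour ! Suc k} = {min y z, max y z}"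
      by blast
    then have "z \<in> {tour ! k, tour ! Suc k}" by (auto simp: min_def max_def)
    then show ?case using k(1) by (auto simp: L_def)
  qed
  have visits: "\<exists>j < L - 1. aw j = i" if iv: "i < n" for i
  proof -
    obtain j where j: "j < L" "tour ! j = i" using inset[OF sd(2)[OF iv]] by (auto simp: in_set_conv_nth L_def)
    show ?thesis
    proof (cases "j = L - 1")
      case True then show ?thesis using j ed(2) ed(3) aw_eq[of 0] L2 by (intro exI[of _ 0]) auto
    next
      case False then show ?thesis using j aw_eq[of j] by (intro exI[of _ j]) auto
    qed
  qed
  have hle: "height h aw A A i s \<le> h 0 * P" if i: "i < n" and s0: "0 \<le> s" for i s
  proof -
    obtain j where j: "j < L - 1" "aw j = i" using visits[OF i] by blast
    have hi0: "0 \<le> h i"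
    proof (cases "i = n - 1")
      case False then have "i < n - 1" using i by linarith
      then show ?thesis using bd(2)[of i "n - 1"] bd(3) bd(1) by simp
    qed (use bd(3) in simp)
    have hi: "h i \<le> h 0" using bd(2)[of 0 i] i by (cases "i = 0") auto
    define X where "X = {0} \<union> (at_times aw A A i \<inter> {..s})"
    have bdd: "bdd_above X" unfolding X_def using s0 by (intro bdd_aboveI[of _ s]) auto
    have "s - Sup X \<le> P"
    proof (cases "s < P")
      case True
      have "0 \<le> Sup X" using bdd by (intro cSup_upper) (auto simp: X_def)
      then show ?thesis using True by linarith
    next
      case False
      have Aj: "A j \<le> P" unfolding P_def using j by (intro A_mono) simp
      define y where "y = (s - A j) / P"
      have y0: "0 \<le> y" using False Aj P_pos by (simp add: y_def)
      define m where "m = nat \<lfloor>y\<rfloor>"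
      have mr: "real m = of_int \<lfloor>y\<rfloor>" using y0 by (simp add: m_def)
      have m1: "real m \<le> y" "y < real m + 1" using mr by linarith+
      have c1: "real m * P \<le> s - A j" using m1(1) P_pos by (simp add: y_def field_simps)
      have c2: "s - A j < (real m + 1) * P" using m1(2) P_pos by (simp add: y_def field_simps)
      define c where "c = A (j + m * (L - 1))"
      have c: "c = A j + real m * P" unfolding c_def by (rule A_per)
      have "c \<in> at_times aw A A i"
        unfolding at_times_def using aw_per[of j m] j(2) by (auto simp: c_def)
      then have "c \<in> X" using c c1 by (auto simp: X_def)
      then have "c \<le> Sup X" using bdd by (rule cSup_upper)
      then show ?thesis using c c2 by (simp add: algebra_simps)
    qed
    then have "height h aw A A i s \<le> h i * P"
      unfolding height_def X_def[symmetric] using hi0 by (simp add: mult_left_mono)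
    also have "\<dots> \<le> h 0 * P" using hi P_pos by (simp add: mult_right_mono)
    finally show ?thesis .
  qed
  show ?thesis
    unfolding MH_def aw_def[symmetric] A_def[symmetric] P_eq[symmetric]
    by (intro SUP_least) (use hle in auto)
qed

theorem theorem4:
  "\<exists>c::real. c > 0 \<and>
     (\<forall>n h t E tour. bgt_instance n h t \<longrightarrow> min_spanning_tree n t E \<longrightarrow> euler_tour E tour \<longrightarrow>
        MH n h (alg_walk tour) (alg_times t tour) (alg_times t tour)
          \<le> ereal (c * h 0 / h (n - 1)) * OPT n h t)"
proof (intro exI[of _ 2] conjI allI impI)
  fix n h t E tour
  assume bgt: "bgt_instance n h t" and mst: "min_spanning_tree n t E" and et: "euler_tour E tour"
  have hm: "0 < h (n - 1)" and h0: "0 < h 0" using bgt_D[OF bgt] by auto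
  have st: "spanning_tree n E" using mst by (simp add: min_spanning_tree_def)
  have lb: "ereal (h (n - 1) * tree_weight t E) \<le> OPT n h t"
    unfolding OPT_def
  proof (rule INF_greatest)
    fix wad assume "wad \<in> {(w, a, d). valid_walk n t w a d}"
    then obtain w a d where "wad = (w, a, d)" "valid_walk n t w a d" by auto
    then show "ereal (h (n - 1) * tree_weight t E) \<le> (case wad of (w, a, d) \<Rightarrow> MH n h w a d)"
      using walk_lb[OF bgt mst] by simp
  qed
  have "MH n h (alg_walk tour) (alg_times t tour) (alg_times t tour) \<le> ereal (h 0 * (2 * tree_weight t E))"
    by (rule upper[OF bgt st et])
  also have "\<dots> = ereal (2 * h 0 / h (n - 1)) * ereal (h (n - 1) * tree_weight t E)"
    using hm by (simp add: field_simps)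
  also have "\<dots> \<le> ereal (2 * h 0 / h (n - 1)) * OPT n h t"
    by (rule ereal_mult_left_mono[OF lb]) (use hm h0 in simp)
  finally show "MH n h (alg_walk tour) (alg_times t tour) (alg_times t tour)
          \<le> ereal (2 * h 0 / h (n - 1)) * OPT n h t" .
qed simp

end
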